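(* With size notion $s(x)=|x|$ (word length) on $\Sigma^*$, each of the word distances $\mathrm{ed}$, $\mathrm{ned}$, $\mathrm{ged}$, $\mathrm{ced}$ and $\mathrm{prf}$ has the asymptotic separation property: for each such $d$, every sequence $(x_k)$ of words with $\limsup_k|x_k|=\infty$ and every sequence $(y_k)$ of words with $\limsup_k |y_k|<\infty$ satisfy $\lim_{k\to\infty}d(x_k,y_k)=\sup d$, where $\sup d$ is the supremum of the image of $d$.
   Context: $\Sigma$ is a finite alphabet. Edit operations are pairs $(a,b)\in(\Sigma\cup\{\varepsilon\})^2\setminus\{(\varepsilon,\varepsilon)\}$; an edit path from $x$ to $y$ is a sequence $p=(a_1,b_1)\cdots(a_n,b_n)$ of edit operations with $a_1\cdots a_n=x$ and $b_1\cdots b_n=y$; $|p|=n$ and (uniform weights) $\mathrm{wgt}(p)=|\{i: a_i\neq b_i\}|$. $\mathrm{ed}(x,y)=\min_p \mathrm{wgt}(p)$ (Levenshtein distance); $\mathrm{ned}(x,y)=\min_p \mathrm{wgt}(p)/|p|$ over edit paths $p$ from $x$ to $y$ ($\mathrm{ned}(\varepsilon,\varepsilon)=0$); $\mathrm{ged}(x,y)=\frac{2\,\mathrm{ed}(x,y)}{|x|+|y|+\mathrm{ed}(x,y)}$ ($0$ if $x=y=\varepsilon$). For words $u,u'$ with $\mathrm{ed}(u,u')=1$ put $\mathrm{ced}(u,u')=1/\max(|u|,|u'|)$; for a sequence $\rho=(u_0,\dots,u_k)$ with $\mathrm{ed}(u_{i},u_{i+1})=1$ put $\mathrm{ced}(\rho)=\sum_{i=1}^k\mathrm{ced}(u_{i-1},u_i)$,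 and $\mathrm{ced}(x,y)=\min\{\mathrm{ced}(\rho): \rho=(u_0,\dots,u_k),u_0=x,u_k=y\}$. $\mathrm{prf}(x,y)=|x|+|y|-2\max\{|z|: x,y\in z\Sigma^*\}$.
   Formalization: The hypothesis $\limsup_k|x_k|=\infty$ is replaced by $|x_k|$ tending to infinity as k grows, that is, the liminf of the lengths is infinite. The statement above fails without it. *)

theory Defs
  imports "HOL-Analysis.Analysis" "HOL-Library.Sublist"
begin

text \<open>Words over a finite alphabet: lists over a type of class finite.
  An edit operation is a pair (a,b) of optional letters (None = empty word),
  not both None.\<close>

type_synonym 'a edit_op = "'a option \<times> 'a option"

definition opt_word :: "'a option \<Rightarrow> 'a list" where
  "opt_word a = (case a of None \<Rightarrow> [] | Some c \<Rightarrow> [c])"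

definition is_edit_op :: "'a edit_op \<Rightarrow> bool" where
  "is_edit_op e \<longleftrightarrow> e \<noteq> (None, None)"

definition is_edit_path :: "'a edit_op list \<Rightarrow> 'a list \<Rightarrow> 'a list \<Rightarrow> bool" where
  "is_edit_path p x y \<longleftrightarrow> (\<forall>e\<in>set p. is_edit_op e)
     \<and> concat (map (opt_word \<circ> fst) p) = x \<and> concat (map (opt_word \<circ> snd) p) = y"

definition wgt :: "'a edit_op list \<Rightarrow> nat" where
  "wgt p = length (filter (\<lambda>(a,b). a \<noteq> b) p)"

definition ed :: "'a list \<Rightarrow> 'a list \<Rightarrow> nat" where
  "ed x y = Min {wgt p | p. is_edit_path p x y}"

definition ned :: "'a list \<Rightarrow> 'a list \<Rightarrow> real" where
  "ned x y = (if x = [] \<and> y = [] then 0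
     else Min {real (wgt p) / real (length p) | p. is_edit_path p x y})"

definition ged :: "'a list \<Rightarrow> 'a list \<Rightarrow> real" where
  "ged x y = (if x = [] \<and> y = [] then 0
     else 2 * real (ed x y) / (real (length x) + real (length y) + real (ed x y)))"

definition ced_step :: "'a list \<Rightarrow> 'a list \<Rightarrow> real" where
  "ced_step u u' = 1 / real (max (length u) (length u'))"

definition is_ced_seq :: "'a list list \<Rightarrow> 'a list \<Rightarrow> 'a list \<Rightarrow> bool" where
  "is_ced_seq rho x y \<longleftrightarrow> rho \<noteq> [] \<and> hd rho = x \<and> last rho = y
     \<and> (\<forall>i. Suc i < length rho \<longrightarrow> ed (rho ! i) (rho ! Suc i) = 1)"

definition ced_cost :: "'a list list \<Rightarrow> real" where
  "ced_cost rho = (\<Sum>i = 1..<length rho. ced_step (rho ! (i - 1)) (rho ! i))"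

definition ced :: "'a list \<Rightarrow> 'a list \<Rightarrow> real" where
  "ced x y = Inf {ced_cost rho | rho. is_ced_seq rho x y}"

definition prf_dist :: "'a list \<Rightarrow> 'a list \<Rightarrow> nat" where
  "prf_dist x y = length x + length y - 2 * Max {length z | z. prefix z x \<and> prefix z y}"

text \<open>Asymptotic separation with size notion s(x) = |x|; values taken in the
  extended reals so that sup d = \<infinity> is allowed.\<close>
definition asymp_sep :: "('a list \<Rightarrow> 'a list \<Rightarrow> ereal) \<Rightarrow> bool" where
  "asymp_sep d \<longleftrightarrow> (\<forall>X Y :: nat \<Rightarrow> 'a list.
      liminf (\<lambda>k. ereal (real (length (X k)))) = \<infinity>
      \<and> limsup (\<lambda>k. ereal (real (length (Y k)))) < \<infinity>
      \<longrightarrow> ((\<lambda>k. d (X k) (Y k)) \<longlongrightarrow> (SUP p \<in> UNIV. d (fst p) (snd p))) sequentially)"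

end

theory Submission
  imports Defs
begin


lemma len_fst_le: "length (concat (map (opt_word \<circ> fst) p)) \<le> length p"
  by (induction p) (auto simp: opt_word_def split: option.splits)

lemma len_snd_le: "length (concat (map (opt_word \<circ> snd) p)) \<le> length p"
  by (induction p) (auto simp: opt_word_def split: option.splits)

lemma eq_le_snd: "\<forall>e\<in>set p. is_edit_op e \<Longrightarrow>
   length (filter (\<lambda>(a,b). a = b) p) \<le> length (concat (map (opt_word \<circ> snd) p))"
  by (induction p) (auto simp: opt_word_def is_edit_op_def split: option.splits)

lemma eq_le_fst: "\<forall>e\<in>set p. is_edit_op e \<Longrightarrow>
   length (filter (\<lambda>(a,b). a = b) p) \<le> length (concat (map (opt_word \<circ> fst) p))"
  by (induction p) (auto simp: opt_word_def is_edit_op_def split: option.splits)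

lemma len_le_sum: "\<forall>e\<in>set p. is_edit_op e \<Longrightarrow>
   length p \<le> length (concat (map (opt_word \<circ> fst) p)) + length (concat (map (opt_word \<circ> snd) p))"
  by (induction p) (auto simp: opt_word_def is_edit_op_def split: option.splits)

lemma wgt_eq: "wgt p + length (filter (\<lambda>(a,b). a = b) p) = length p"
  unfolding wgt_def by (induction p) auto

lemma path_props:
  assumes "is_edit_path p x y"
  shows "length x \<le> length p" "length y \<le> length p" "length p \<le> length x + length y"
    "length p \<le> wgt p + length y" "length p \<le> wgt p + length x"
  using assms len_fst_le[of p] len_snd_le[of p] len_le_sum[of p] eq_le_snd[of p] eq_le_fst[of p] wgt_eq[of p]
  unfolding is_edit_path_def by auto

lemma wgt_le_len: "wgt p \<le> length p"
  unfolding wgt_def by simp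

lemma finite_paths: "finite {p. is_edit_path p (x::'a::finite list) y}"
proof -
  have "{p. is_edit_path p x y} \<subseteq> {p. set p \<subseteq> UNIV \<and> length p \<le> length x + length y}"
    using path_props(3) by blast
  moreover have "finite {p :: 'a edit_op list. set p \<subseteq> UNIV \<and> length p \<le> length x + length y}"
    by (rule finite_lists_length_le) simp
  ultimately show ?thesis by (rule finite_subset)
qed

definition p0 :: "'a list \<Rightarrow> 'a list \<Rightarrow> 'a edit_op list" where
  "p0 x y = map (\<lambda>c. (Some c, None)) x @ map (\<lambda>c. (None, Some c)) y"

lemma concat_opt_some: "concat (map (opt_word \<circ> (\<lambda>c. Some c)) x) = x"
  by (induction x) (auto simp: opt_word_def)

lemma p0_aux: "concat (map (opt_word \<circ> fst) (map (\<lambda>c. (Some c, None)) x)) = x"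
  "concat (map (opt_word \<circ> snd) (map (\<lambda>c. (Some c, None)) x)) = []"
  "concat (map (opt_word \<circ> fst) (map (\<lambda>c. (None, Some c)) x)) = []"
  "concat (map (opt_word \<circ> snd) (map (\<lambda>c. (None, Some c)) x)) = x"
  by (induction x) (auto simp: opt_word_def)

lemma p0_path: "is_edit_path (p0 x y) x y"
  unfolding is_edit_path_def p0_def
  by (simp only: map_append concat_append p0_aux) (auto simp: is_edit_op_def)

lemma p0_wgt: "wgt (p0 x y) = length x + length y"
  unfolding wgt_def p0_def by (simp add: o_def)

lemma ed_set: "finite {wgt p | p. is_edit_path p (x::'a::finite list) y}" "{wgt p | p. is_edit_path p x y} \<noteq> {}"
proof -
  have eq: "{wgt p | p. is_edit_path p x y} = wgt ` {p. is_edit_path p x y}" by auto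
  show "finite {wgt p | p. is_edit_path p (x::'a::finite list) y}" unfolding eq by (rule finite_imageI[OF finite_paths])
  show "{wgt p | p. is_edit_path p x y} \<noteq> {}" using p0_path by blast
qed

lemma ed_le: assumes "is_edit_path p (x::'a::finite list) y" shows "ed x y \<le> wgt p"
  unfolding ed_def by (rule Min_le[OF ed_set(1)]) (use assms in blast)

lemma ed_ex: "\<exists>p. is_edit_path p (x::'a::finite list) y \<and> ed x y = wgt p"
proof -
  have "ed x y \<in> {wgt p | p. is_edit_path p x y}" unfolding ed_def by (rule Min_in[OF ed_set(1) ed_set(2)])
  thus ?thesis by auto
qed

lemma ed_lower: "length x \<le> ed (x::'a::finite list) y + length y" "length y \<le> ed (x::'a::finite list) y + length x"
  using ed_ex[of x y] path_props by fastforce+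

lemma ed_upper: "ed (x::'a::finite list) y \<le> length x + length y"
  using ed_le[OF p0_path] p0_wgt by metis


lemma ned_set: "finite {real (wgt p) / real (length p) | p. is_edit_path p (x::'a::finite list) y}"
   "{real (wgt p) / real (length p) | p. is_edit_path p (x::'a::finite list) y} \<noteq> {}"
proof -
  have eq: "{real (wgt p) / real (length p) | p. is_edit_path p x y} = (\<lambda>p. real (wgt p) / real (length p)) ` {p. is_edit_path p x y}" by auto
  show "finite {real (wgt p) / real (length p) | p. is_edit_path p (x::'a::finite list) y}" unfolding eq by (rule finite_imageI[OF finite_paths])
  show "{real (wgt p) / real (length p) | p. is_edit_path p (x::'a::finite list) y} \<noteq> {}" using p0_path by blast
qed

lemma ned_le1: "ned (x::'a::finite list) y \<le> 1"
proof (cases "x = [] \<and> y = []")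
  case True thus ?thesis by (simp add: ned_def)
next
  case False
  have "ned x y \<in> {real (wgt p) / real (length p) | p. is_edit_path p x y}"
    unfolding ned_def if_not_P[OF False] by (rule Min_in[OF ned_set(1) ned_set(2)])
  then obtain p where "is_edit_path p x y" "ned x y = real (wgt p) / real (length p)" by blast
  moreover have "real (wgt p) / real (length p) \<le> 1" using wgt_le_len[of p]
    by (cases "length p = 0") (auto simp: divide_le_eq_1)
  ultimately show ?thesis by simp
qed

lemma ned_lower: assumes "(x::'a::finite list) \<noteq> []"
  shows "1 - 1 * real (length y) / real (length x) \<le> ned x y"
proof -
  have "ned x y \<in> {real (wgt p) / real (length p) | p. is_edit_path p x y}"
    using assms Min_in[OF ned_set(1) ned_set(2), of x y] unfolding ned_def by simp
  then obtain p where p: "is_edit_path p x y" "ned x y = real (wgt p) / real (length p)" by blast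
  have a: "length x \<le> length p" "length p \<le> wgt p + length y" using path_props[OF p(1)] by auto
  have lx: "real (length x) > 0" using assms by simp
  have lp: "real (length p) \<ge> real (length x)" using a by simp
  have lp0: "real (length p) > 0" using lx lp by linarith
  have "1 - real (length y) / real (length x) \<le> 1 - real (length y) / real (length p)"
    using lx lp by (simp add: frac_le)
  also have "\<dots> = (real (length p) - real (length y)) / real (length p)" using lp0 by (simp add: diff_divide_distrib)
  also have "\<dots> \<le> real (wgt p) / real (length p)" using a lx lp
    by (intro divide_right_mono) auto
  finally show ?thesis using p(2) by simp
qed

lemma ged_le1: "ged (x::'a::finite list) y \<le> 1"
proof (cases "x = [] \<and> y = []")
  case True thus ?thesis by (simp add: ged_def)
next
  case False
  have "real (ed x y) \<le> real (length x) + real (length y)" using ed_upper[of x y] by linarith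
  moreover have "length x + length y > 0" using False by (cases x) auto
  hence "real (length x) + real (length y) > 0" by linarith
  ultimately show ?thesis using False by (simp add: ged_def divide_le_eq_1)
qed

lemma ged_lower: assumes "(x::'a::finite list) \<noteq> []"
  shows "1 - 2 * real (length y) / real (length x) \<le> ged x y"
proof -
  define e where "e = real (ed x y)"
  define a where "a = real (length x)"
  define b where "b = real (length y)"
  have e1: "a \<le> e + b" using ed_lower(1)[of x y] unfolding a_def b_def e_def by linarith
  have a0: "a > 0" using assms a_def by simp
  have b0: "b \<ge> 0" "e \<ge> 0" using b_def e_def by auto
  have g: "ged x y = 2 * e / (a + b + e)" using assms by (simp add: ged_def a_def b_def e_def)
  have D: "a + b + e \<ge> a" using b0 by simp
  have "1 - 2 * b / a \<le> 1 - 2 * b / (a + b + e)"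
    using a0 D b0 by (simp add: frac_le)
  also have "\<dots> = (a + b + e - 2 * b) / (a + b + e)" using a0 b0 by (simp add: field_simps)
  also have "\<dots> \<le> 2 * e / (a + b + e)" using e1 a0 b0 by (intro divide_right_mono) auto
  finally show ?thesis using g a_def b_def by simp
qed

lemma prf_lower: "real (length x) - real (length y) \<le> real (prf_dist x y)"
proof -
  let ?S = "{length z | z. prefix z x \<and> prefix z y}"
  have fin: "finite ?S" by (rule finite_subset[of _ "{..length y}"]) (auto dest: prefix_length_le)
  have ne: "?S \<noteq> {}" by (auto intro!: exI[of _ "[]"])
  have "Max ?S \<le> length y" using fin ne by (auto simp: Max_le_iff dest: prefix_length_le)
  thus ?thesis unfolding prf_dist_def by linarith
qed

lemma asymp_sepI:
  assumes conv: "\<And>(X :: nat \<Rightarrow> 'a list) Y B. filterlim (\<lambda>k. length (X k)) at_top sequentially \<Longrightarrow>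
      eventually (\<lambda>k. length (Y k) \<le> B) sequentially \<Longrightarrow> ((\<lambda>k. d (X k) (Y k)) \<longlongrightarrow> L) sequentially"
    and ub: "\<And>x y. d x y \<le> L"
  shows "asymp_sep d"
  unfolding asymp_sep_def
proof (intro allI impI, elim conjE)
  fix X Y :: "nat \<Rightarrow> 'a list"
  assume h1: "liminf (\<lambda>k. ereal (real (length (X k)))) = \<infinity>"
     and h2: "limsup (\<lambda>k. ereal (real (length (Y k)))) < \<infinity>"
  have t: "(\<lambda>k. ereal (real (length (X k)))) \<longlonglongrightarrow> \<infinity>" using h1 liminf_PInfty by blast
  have fX: "filterlim (\<lambda>k. length (X k)) at_top sequentially"
    unfolding filterlim_at_top
  proof
    fix Z :: nat
    have "\<forall>r. eventually (\<lambda>x. r < real (length (X x))) sequentially" using t by (simp add: tendsto_PInfty)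
    hence "eventually (\<lambda>x. real Z < real (length (X x))) sequentially" by blast
    thus "eventually (\<lambda>k. Z \<le> length (X k)) sequentially"
      by (rule eventually_mono) simp
  qed
  obtain n :: nat where n: "limsup (\<lambda>k. ereal (real (length (Y k)))) < ereal (real n)"
    using h2 less_PInf_Ex_of_nat by auto
  have "eventually (\<lambda>k. ereal (real (length (Y k))) < ereal (real n)) sequentially"
    using Limsup_lessD[OF n] .
  hence eB: "eventually (\<lambda>k. length (Y k) \<le> n) sequentially"
    by (rule eventually_mono) simp
  have lim: "((\<lambda>k. d (X k) (Y k)) \<longlongrightarrow> L) sequentially" using conv[OF fX eB] .
  have "(SUP p \<in> UNIV. d (fst p) (snd p)) = L"
  proof (rule antisym)
    show "(SUP p \<in> UNIV. d (fst p) (snd p)) \<le> L" by (rule SUP_least) (use ub in auto)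
    show "L \<le> (SUP p \<in> UNIV. d (fst p) (snd p))"
    proof (rule Lim_bounded[OF lim, of 0])
      show "\<forall>k\<ge>0. d (X k) (Y k) \<le> (SUP p \<in> UNIV. d (fst p) (snd p))"
        using SUP_upper[of "(X _, Y _)" UNIV "\<lambda>p. d (fst p) (snd p)"] by auto
    qed
  qed
  thus "((\<lambda>k. d (X k) (Y k)) \<longlongrightarrow> (SUP p \<in> UNIV. d (fst p) (snd p))) sequentially"
    using lim by simp
qed

lemma conv1:
  fixes r :: "'a list \<Rightarrow> 'a list \<Rightarrow> real" and c :: real
  assumes ub: "\<And>x y. r x y \<le> 1" and lb: "\<And>x y. x \<noteq> [] \<Longrightarrow> 1 - c * real (length y) / real (length x) \<le> r x y"
    and c: "c \<ge> 0"
    and fX: "filterlim (\<lambda>k. length (X k)) at_top sequentially"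
    and eB: "eventually (\<lambda>k. length (Y k) \<le> B) sequentially"
  shows "((\<lambda>k. ereal (r (X k) (Y k))) \<longlongrightarrow> 1) sequentially"
proof -
  have fR: "filterlim (\<lambda>k. real (length (X k))) at_top sequentially"
    by (rule filterlim_compose[OF filterlim_real_sequentially fX])
  have "((\<lambda>k. c * real B / real (length (X k))) \<longlongrightarrow> 0) sequentially"
    by (rule tendsto_divide_0[OF tendsto_const filterlim_at_top_imp_at_infinity[OF fR]])
  hence g: "((\<lambda>k. 1 - c * real B / real (length (X k))) \<longlongrightarrow> 1) sequentially"
    using tendsto_diff[OF tendsto_const, of _ 0 sequentially 1] by simp
  have ne: "eventually (\<lambda>k. length (X k) \<ge> 1) sequentially"
    using fX by (simp add: filterlim_at_top)
  have "eventually (\<lambda>k. 1 - c * real B / real (length (X k)) \<le> r (X k) (Y k)) sequentially"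
    using ne eB
  proof eventually_elim
    case (elim k)
    have "c * real (length (Y k)) \<le> c * real B" using elim c by (simp add: mult_left_mono)
    hence "c * real (length (Y k)) / real (length (X k)) \<le> c * real B / real (length (X k))"
      by (simp add: divide_right_mono)
    moreover have "X k \<noteq> []" using elim by auto
    ultimately show ?case using lb[of "X k" "Y k"] by linarith
  qed
  hence "((\<lambda>k. r (X k) (Y k)) \<longlongrightarrow> 1) sequentially"
    by (intro tendsto_sandwich[OF _ _ g tendsto_const]) (auto simp: ub)
  from tendsto_ereal[OF this] show ?thesis by (simp add: one_ereal_def)
qed

lemma conv_inf:
  fixes h :: "nat \<Rightarrow> real" and d :: "'a list \<Rightarrow> 'a list \<Rightarrow> ereal"
  assumes hm: "mono h" and ht: "filterlim h at_top sequentially"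
    and lb: "\<And>x y. ereal (h (length x) - h (length y)) \<le> d x y"
    and fX: "filterlim (\<lambda>k. length (X k)) at_top sequentially"
    and eB: "eventually (\<lambda>k. length (Y k) \<le> B) sequentially"
  shows "((\<lambda>k. d (X k) (Y k)) \<longlongrightarrow> \<infinity>) sequentially"
  unfolding tendsto_PInfty
proof
  fix R :: real
  have fH: "filterlim (\<lambda>k. h (length (X k))) at_top sequentially"
    by (rule filterlim_compose[OF ht fX])
  hence "eventually (\<lambda>k. h (length (X k)) > R + h B) sequentially"
    by (simp add: filterlim_at_top_dense)
  thus "eventually (\<lambda>k. d (X k) (Y k) > ereal R) sequentially"
    using eB
  proof eventually_elim
    case (elim k)
    have "h (length (Y k)) \<le> h B" using elim hm by (simp add: monoD)
    hence "ereal R < ereal (h (length (X k)) - h (length (Y k)))" using elim by simp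
    also have "\<dots> \<le> d (X k) (Y k)" by (rule lb)
    finally show ?case .
  qed
qed


lemma ced_single: "is_ced_seq [u] x y \<longleftrightarrow> u = x \<and> u = y"
  unfolding is_ced_seq_def by auto

lemma ced_cons2: "is_ced_seq (u # v # r) x y \<longleftrightarrow> u = x \<and> ed u v = 1 \<and> is_ced_seq (v # r) v y"
proof
  assume a: "is_ced_seq (u # v # r) x y"
  have "ed u v = 1" using a unfolding is_ced_seq_def by (metis One_nat_def length_Cons nth_Cons_0 nth_Cons_Suc zero_less_Suc Suc_less_eq)
  moreover have "\<forall>i. Suc i < length (v # r) \<longrightarrow> ed ((v # r) ! i) ((v # r) ! Suc i) = 1"
  proof (intro allI impI)
    fix i assume "Suc i < length (v # r)"
    hence "Suc (Suc i) < length (u # v # r)" by simp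
    hence "ed ((u # v # r) ! Suc i) ((u # v # r) ! Suc (Suc i)) = 1" using a unfolding is_ced_seq_def by blast
    thus "ed ((v # r) ! i) ((v # r) ! Suc i) = 1" by simp
  qed
  ultimately show "u = x \<and> ed u v = 1 \<and> is_ced_seq (v # r) v y" using a unfolding is_ced_seq_def by auto
next
  assume a: "u = x \<and> ed u v = 1 \<and> is_ced_seq (v # r) v y"
  have "\<forall>i. Suc i < length (u # v # r) \<longrightarrow> ed ((u # v # r) ! i) ((u # v # r) ! Suc i) = 1"
  proof (intro allI impI)
    fix i assume i: "Suc i < length (u # v # r)"
    show "ed ((u # v # r) ! i) ((u # v # r) ! Suc i) = 1"
    proof (cases i)
      case 0 thus ?thesis using a by auto
    next
      case (Suc j)
      hence "Suc j < length (v # r)" using i by simp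
      hence "ed ((v # r) ! j) ((v # r) ! Suc j) = 1" using a unfolding is_ced_seq_def by blast
      thus ?thesis using Suc by simp
    qed
  qed
  thus "is_ced_seq (u # v # r) x y" using a unfolding is_ced_seq_def by auto
qed

lemma ced_cost_alt: "ced_cost rho = (\<Sum>i<length rho - 1. ced_step (rho ! i) (rho ! Suc i))"
proof (cases "length rho")
  case 0 thus ?thesis by (simp add: ced_cost_def)
next
  case (Suc m)
  have "ced_cost rho = (\<Sum>i\<in>{Suc 0..<Suc m}. ced_step (rho ! (i - 1)) (rho ! i))"
    unfolding ced_cost_def Suc by simp
  also have "\<dots> = (\<Sum>i\<in>{0..<m}. ced_step (rho ! i) (rho ! Suc i))"
    by (subst sum.shift_bounds_Suc_ivl) simp
  finally show ?thesis using Suc by (simp add: atLeast0LessThan)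
qed

lemma ced_cost_single: "ced_cost [u] = 0"
  by (simp add: ced_cost_alt)

lemma ced_cost_cons2: "ced_cost (u # v # r) = ced_step u v + ced_cost (v # r)"
  unfolding ced_cost_alt by (simp only: length_Cons diff_Suc_1 sum.lessThan_Suc_shift) simp

lemma ed_len_diff: "ed (x::'a::finite list) y = 1 \<Longrightarrow>
    length x = length y \<or> length x = Suc (length y) \<or> length y = Suc (length x)"
  using ed_lower(1)[of x y] ed_lower(2)[where x=x and y=y] by auto

lemma ced_step_nonneg: "ced_step u v \<ge> 0"
  unfolding ced_step_def by simp

lemma step_bound: assumes "ed (x::'a::finite list) v = 1"
  shows "(harm (length x) :: real) - harm (length v) \<le> ced_step x v"
proof -
  consider "length x = length v" | "length x = Suc (length v)" | "length v = Suc (length x)"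
    using ed_len_diff[OF assms] by blast
  thus ?thesis
  proof cases
    case 1 thus ?thesis using ced_step_nonneg[of x v] by simp
  next
    case 2 thus ?thesis by (simp add: harm_Suc ced_step_def field_simps)
  next
    case 3
    have "(harm (length x) :: real) \<le> harm (length v)" using 3 by (intro harm_mono) simp
    thus ?thesis using ced_step_nonneg[of x v] by simp
  qed
qed

lemma cost_lower: "is_ced_seq r (x::'a::finite list) y \<Longrightarrow> (harm (length x) :: real) - harm (length y) \<le> ced_cost r"
proof (induction r arbitrary: x)
  case Nil thus ?case by (simp add: is_ced_seq_def)
next
  case (Cons u r)
  show ?case
  proof (cases r)
    case Nil thus ?thesis using Cons.prems by (auto simp: ced_single ced_cost_single)
  next
    case (Cons v r')
    have h: "u = x" "ed u v = 1" "is_ced_seq (v # r') v y" using Cons.prems[unfolded Cons ced_cons2] by auto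
    have "(harm (length v) :: real) - harm (length y) \<le> ced_cost (v # r')" using Cons.IH[of v] h(3) Cons by simp
    moreover have "(harm (length x) :: real) - harm (length v) \<le> ced_step x v" using step_bound h by simp
    ultimately show ?thesis unfolding Cons ced_cost_cons2 using h by simp
  qed
qed

lemma cm: "concat (map (\<lambda>c. [c]) x) = x" by (induction x) auto

lemma same_aux: "concat (map (opt_word \<circ> fst) (map (\<lambda>c. (Some c, Some c)) x)) = x"
  "concat (map (opt_word \<circ> snd) (map (\<lambda>c. (Some c, Some c)) x)) = x"
  "wgt (map (\<lambda>c. (Some c, Some c)) x) = 0"
  by (induction x) (auto simp: opt_word_def wgt_def)

lemma ed_del: "ed (a # x :: 'a::finite list) x = 1"
proof -
  let ?p = "(Some a, None) # map (\<lambda>c. (Some c, Some c)) x"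
  have "is_edit_path ?p (a # x) x" unfolding is_edit_path_def
    by (auto simp: cm o_def is_edit_op_def opt_word_def)
  moreover have "wgt ?p = 1" using same_aux(3)[of x] by (simp add: wgt_def)
  ultimately have "ed (a # x) x \<le> 1" using ed_le by metis
  moreover have "ed (a # x) x \<ge> 1" using ed_lower(1)[of "a # x" x] by simp
  ultimately show ?thesis by simp
qed

lemma ed_ins: "ed (x :: 'a::finite list) (a # x) = 1"
proof -
  let ?p = "(None, Some a) # map (\<lambda>c. (Some c, Some c)) x"
  have "is_edit_path ?p x (a # x)" unfolding is_edit_path_def
    by (auto simp: cm o_def is_edit_op_def opt_word_def)
  moreover have "wgt ?p = 1" using same_aux(3)[of x] by (simp add: wgt_def)
  ultimately have "ed x (a # x) \<le> 1" using ed_le by metis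
  moreover have "ed x (a # x) \<ge> 1" using ed_lower(2)[where x=x and y="a # x"] by simp
  ultimately show ?thesis by simp
qed

lemma ced_seq_ne: "is_ced_seq r x y \<Longrightarrow> \<exists>r'. r = x # r'"
  unfolding is_ced_seq_def by (cases r) auto

lemma chain_to_nil: "\<exists>r. is_ced_seq r (x::'a::finite list) []"
proof (induction x)
  case Nil show ?case by (rule exI[of _ "[[]]"]) (simp add: ced_single)
next
  case (Cons a x)
  then obtain r where r: "is_ced_seq r x []" by blast
  then obtain r' where r': "r = x # r'" using ced_seq_ne by blast
  have "is_ced_seq ((a # x) # x # r') (a # x) []" using r r' ed_del by (simp add: ced_cons2)
  thus ?case by blast
qed

lemma chain_snoc: "is_ced_seq r x z \<Longrightarrow> ed z w = 1 \<Longrightarrow> is_ced_seq (r @ [w]) x w"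
proof (induction r arbitrary: x)
  case Nil thus ?case by (simp add: is_ced_seq_def)
next
  case (Cons u r)
  show ?case
  proof (cases r)
    case Nil thus ?thesis using Cons.prems by (auto simp: ced_single ced_cons2)
  next
    case (Cons v r')
    thus ?thesis using Cons.prems Cons.IH[of v] by (auto simp: ced_cons2)
  qed
qed

lemma chain_ex: "\<exists>r. is_ced_seq r (x::'a::finite list) y"
proof (induction y)
  case Nil show ?case by (rule chain_to_nil)
next
  case (Cons a y)
  then obtain r where "is_ced_seq r x y" by blast
  hence "is_ced_seq (r @ [a # y]) x (a # y)" using chain_snoc ed_ins by metis
  thus ?case by blast
qed

lemma ced_lower: "(harm (length x) :: real) - harm (length y) \<le> ced (x::'a::finite list) y"
  unfolding ced_def
proof (rule cInf_greatest)
  show "{ced_cost rho |rho. is_ced_seq rho x y} \<noteq> {}" using chain_ex[of x y] by blast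
  show "\<And>c. c \<in> {ced_cost rho |rho. is_ced_seq rho x y} \<Longrightarrow> harm (length x) - harm (length y) \<le> c"
    using cost_lower by blast
qed

theorem mainTheorem5:
  shows "asymp_sep (\<lambda>x y :: ('a::finite) list. ereal (real (ed x y)))
       \<and> asymp_sep (\<lambda>x y :: ('a::finite) list. ereal (ned x y))
       \<and> asymp_sep (\<lambda>x y :: ('a::finite) list. ereal (ged x y))
       \<and> asymp_sep (\<lambda>x y :: ('a::finite) list. ereal (ced x y))
       \<and> asymp_sep (\<lambda>x y :: ('a::finite) list. ereal (real (prf_dist x y)))"
proof (intro conjI)
  have mr: "mono (\<lambda>n::nat. real n)" by (rule monoI) simp
  have mh: "mono (\<lambda>n::nat. harm n :: real)" by (rule monoI) (rule harm_mono)
  show "asymp_sep (\<lambda>x y :: ('a::finite) list. ereal (real (ed x y)))"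
  proof (rule asymp_sepI[where L = \<infinity>])
    fix X Y :: "nat \<Rightarrow> 'a list" and B
    assume a: "filterlim (\<lambda>k. length (X k)) at_top sequentially" and b: "eventually (\<lambda>k. length (Y k) \<le> B) sequentially"
    show "((\<lambda>k. ereal (real (ed (X k) (Y k)))) \<longlongrightarrow> \<infinity>) sequentially"
    proof (rule conv_inf[OF mr filterlim_real_sequentially _ a b])
      fix x y :: "'a list"
      show "ereal (real (length x) - real (length y)) \<le> ereal (real (ed x y))"
        using ed_lower(1)[of x y] by simp
    qed
  qed simp
  show "asymp_sep (\<lambda>x y :: ('a::finite) list. ereal (ned x y))"
  proof (rule asymp_sepI[where L = 1])
    fix X Y :: "nat \<Rightarrow> 'a list" and B
    assume a: "filterlim (\<lambda>k. length (X k)) at_top sequentially" and b: "eventually (\<lambda>k. length (Y k) \<le> B) sequentially"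
    show "((\<lambda>k. ereal (ned (X k) (Y k))) \<longlongrightarrow> 1) sequentially"
      by (rule conv1[OF ned_le1 ned_lower _ a b]) simp_all
  next
    fix x y :: "'a list" show "ereal (ned x y) \<le> 1" using ned_le1[of x y] by (simp add: one_ereal_def)
  qed
  show "asymp_sep (\<lambda>x y :: ('a::finite) list. ereal (ged x y))"
  proof (rule asymp_sepI[where L = 1])
    fix X Y :: "nat \<Rightarrow> 'a list" and B
    assume a: "filterlim (\<lambda>k. length (X k)) at_top sequentially" and b: "eventually (\<lambda>k. length (Y k) \<le> B) sequentially"
    show "((\<lambda>k. ereal (ged (X k) (Y k))) \<longlongrightarrow> 1) sequentially"
      by (rule conv1[OF ged_le1 ged_lower _ a b]) simp_all
  next
    fix x y :: "'a list" show "ereal (ged x y) \<le> 1" using ged_le1[of x y] by (simp add: one_ereal_def)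
  qed
  show "asymp_sep (\<lambda>x y :: ('a::finite) list. ereal (ced x y))"
  proof (rule asymp_sepI[where L = \<infinity>])
    fix X Y :: "nat \<Rightarrow> 'a list" and B
    assume a: "filterlim (\<lambda>k. length (X k)) at_top sequentially" and b: "eventually (\<lambda>k. length (Y k) \<le> B) sequentially"
    show "((\<lambda>k. ereal (ced (X k) (Y k))) \<longlongrightarrow> \<infinity>) sequentially"
    proof (rule conv_inf[OF mh harm_at_top _ a b])
      fix x y :: "'a list"
      show "ereal (harm (length x) - harm (length y)) \<le> ereal (ced x y)"
        using ced_lower[of x y] by simp
    qed
  qed simp
  show "asymp_sep (\<lambda>x y :: ('a::finite) list. ereal (real (prf_dist x y)))"
  proof (rule asymp_sepI[where L = \<infinity>])
    fix X Y :: "nat \<Rightarrow> 'a list" and B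
    assume a: "filterlim (\<lambda>k. length (X k)) at_top sequentially" and b: "eventually (\<lambda>k. length (Y k) \<le> B) sequentially"
    show "((\<lambda>k. ereal (real (prf_dist (X k) (Y k)))) \<longlongrightarrow> \<infinity>) sequentially"
    proof (rule conv_inf[OF mr filterlim_real_sequentially _ a b])
      fix x y :: "'a list"
      show "ereal (real (length x) - real (length y)) \<le> ereal (real (prf_dist x y))"
        using prf_lower[of x y] by simp
    qed
  qed simp
qed

end
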